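(* Let $x\in\mathcal H$, $\lambda>0$, $\hat\sigma\ge0$, and let $(y,u,\varepsilon)$ be a $\hat\sigma$-approximate PG solution at $(x,\lambda)$. Define $v:=u+\nabla g(y)$ and $\sigma:=\frac{\lambda L}{\sqrt{1+\lambda\mu}}+\hat\sigma$. Then $v\in\partial_\varepsilon f(y)+\nabla g(y)$ and $\frac{\|\lambda v+y-x\|^2}{1+\lambda\mu}+2\lambda\varepsilon\le\sigma^2\|y-x\|^2$.
   Context: $\mathcal H$ is a finite-dimensional real inner product space with norm $\|\cdot\|$. $f,g:\mathcal H\to(-\infty,\infty]$ are proper, closed, convex; $g$ is $\mu$-strongly convex ($\mu>0$). $\Omega\subseteq\mathcal H$ is a nonempty closed convex set containing $\mathrm{dom}\,f$, $P_\Omega$ is the orthogonal projection onto $\Omega$, and $g$ is differentiable on an open set containing $\Omega$ with $\|\nabla g(x)-\nabla g(y)\|\le L\|x-y\|$ for $x,y\in\Omega$, $L>0$. For $\varepsilon\ge0$, $\partial_\varepsilon f(y):=\{u: f(w)\ge f(y)+\langle u,w-y\rangle-\varepsilon\ \forall w\}$. Definition: for $\hat\sigma\ge0$, $(y,u,\varepsilon)\in\mathcal H\times\mathcal H\times[0,\infty)$ is a $\hat\sigma$-approximate Proximal-Gradient (PG) solution at $(x,\lambda)\in\mathcal H\times(0,\infty)$ if, with $z:=P_\Omega(x)$, $u\in\partial_\varepsilon f(y)$ and $\frac{\|\lambda(u+\nabla g(z))+y-x\|^2}{1+\lambda\mu}+2\lambda\varepsilon\le\hat\sigma^2\|y-x\|^2$.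 *)

theory Defs
  imports "HOL-Analysis.Analysis"
begin

text \<open>Extended-real-valued functions H -> (-inf, +inf] are modelled as 'a => ereal
  together with the requirement that -inf is never attained (part of properness).\<close>

definition epigraph :: "('a \<Rightarrow> ereal) \<Rightarrow> ('a \<times> real) set" where
  "epigraph f = {(x, t). f x \<le> ereal t}"

definition edom :: "('a \<Rightarrow> ereal) \<Rightarrow> 'a set" where
  "edom f = {x. f x < \<infinity>}"

definition proper_fun :: "('a \<Rightarrow> ereal) \<Rightarrow> bool" where
  "proper_fun f \<longleftrightarrow> (\<forall>x. f x \<noteq> -\<infinity>) \<and> (\<exists>x. f x \<noteq> \<infinity>)"

definition closed_fun :: "('a::topological_space \<Rightarrow> ereal) \<Rightarrow> bool" where
  "closed_fun f \<longleftrightarrow> closed (epigraph f)"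

definition convex_fun :: "('a::real_vector \<Rightarrow> ereal) \<Rightarrow> bool" where
  "convex_fun f \<longleftrightarrow> convex (epigraph f)"

definition strongly_convex_fun :: "real \<Rightarrow> ('a::real_normed_vector \<Rightarrow> ereal) \<Rightarrow> bool" where
  "strongly_convex_fun \<mu> g \<longleftrightarrow> convex_fun (\<lambda>x. g x - ereal (\<mu> / 2 * (norm x)\<^sup>2))"

definition eps_subdiff :: "('a::real_inner \<Rightarrow> ereal) \<Rightarrow> real \<Rightarrow> 'a \<Rightarrow> 'a set" where
  "eps_subdiff f \<epsilon> y = {u. \<forall>w. f w \<ge> f y + ereal (inner u (w - y)) - ereal \<epsilon>}"

definition approx_PG_solution ::
  "('a::euclidean_space \<Rightarrow> ereal) \<Rightarrow> ('a \<Rightarrow> 'a) \<Rightarrow> 'a set \<Rightarrow> real \<Rightarrow> real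
     \<Rightarrow> 'a \<Rightarrow> real \<Rightarrow> 'a \<Rightarrow> 'a \<Rightarrow> real \<Rightarrow> bool" where
  "approx_PG_solution f gradg \<Omega> \<mu> \<sigma>h x lam y u \<epsilon> \<longleftrightarrow>
     \<epsilon> \<ge> 0 \<and> u \<in> eps_subdiff f \<epsilon> y \<and>
     (norm (lam *\<^sub>R (u + gradg (closest_point \<Omega> x)) + y - x))\<^sup>2 / (1 + lam * \<mu>) + 2 * lam * \<epsilon>
       \<le> \<sigma>h\<^sup>2 * (norm (y - x))\<^sup>2"

end

theory Submission
  imports Defs
begin

theorem proposition5p1:
  fixes f g :: "'a::euclidean_space \<Rightarrow> ereal"
    and gradg :: "'a \<Rightarrow> 'a"
    and \<Omega> U :: "'a set"
    and \<mu> L lam \<sigma>h \<epsilon> :: real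
    and x y u :: 'a
  assumes f_proper: "proper_fun f" and f_closed: "closed_fun f" and f_convex: "convex_fun f"
    and g_proper: "proper_fun g" and g_closed: "closed_fun g" and g_convex: "convex_fun g"
    and mu_pos: "\<mu> > 0" and g_strong: "strongly_convex_fun \<mu> g"
    and Omega_ne: "\<Omega> \<noteq> {}" and Omega_closed: "closed \<Omega>" and Omega_convex: "convex \<Omega>"
    and dom_sub: "edom f \<subseteq> \<Omega>"
    and U_open: "open U" and Omega_sub_U: "\<Omega> \<subseteq> U"
    and g_finite: "\<forall>z\<in>U. \<bar>g z\<bar> \<noteq> \<infinity>"
    and g_grad: "\<forall>z\<in>U. ((\<lambda>w. real_of_ereal (g w)) has_derivative (\<lambda>h. inner (gradg z) h)) (at z)"
    and L_pos: "L > 0"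
    and g_lip: "\<forall>a\<in>\<Omega>. \<forall>b\<in>\<Omega>. norm (gradg a - gradg b) \<le> L * norm (a - b)"
    and lam_pos: "lam > 0" and sigh_nonneg: "\<sigma>h \<ge> 0"
    and PG: "approx_PG_solution f gradg \<Omega> \<mu> \<sigma>h x lam y u \<epsilon>"
  shows "let v = u + gradg y; \<sigma> = lam * L / sqrt (1 + lam * \<mu>) + \<sigma>h in
           v \<in> (\<lambda>w. w + gradg y) ` eps_subdiff f \<epsilon> y \<and>
           (norm (lam *\<^sub>R v + y - x))\<^sup>2 / (1 + lam * \<mu>) + 2 * lam * \<epsilon> \<le> \<sigma>\<^sup>2 * (norm (y - x))\<^sup>2"
proof -
  define z where "z = closest_point \<Omega> x"
  have eps: "\<epsilon> \<ge> 0" and usub: "u \<in> eps_subdiff f \<epsilon> y"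
    and ineq: "(norm (lam *\<^sub>R (u + gradg z) + y - x))\<^sup>2 / (1 + lam * \<mu>) + 2 * lam * \<epsilon>
       \<le> \<sigma>h\<^sup>2 * (norm (y - x))\<^sup>2"
    using PG unfolding approx_PG_solution_def z_def by auto
  obtain w where fw: "f w \<noteq> \<infinity>" using f_proper unfolding proper_fun_def by auto
  have "f w \<ge> f y + ereal (inner u (w - y)) - ereal \<epsilon>" using usub unfolding eps_subdiff_def by auto
  hence "f y \<noteq> \<infinity>" using fw by auto
  hence "y \<in> edom f" unfolding edom_def using less_ereal.simps(3) by (simp add: top.not_eq_extremum)
  hence yO: "y \<in> \<Omega>" using dom_sub by auto
  have zO: "z \<in> \<Omega>" unfolding z_def using closest_point_in_set Omega_closed Omega_ne by blast
  have "dist (closest_point \<Omega> y) (closest_point \<Omega> x) \<le> dist y x"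
    by (rule closest_point_lipschitz[OF Omega_convex Omega_closed Omega_ne])
  hence yz: "norm (y - z) \<le> norm (y - x)" using closest_point_self[OF yO] by (simp add: z_def dist_norm)
  define d where "d = norm (y - x)"
  define a where "a = norm (lam *\<^sub>R (u + gradg z) + y - x)"
  define s where "s = sqrt (1 + lam * \<mu>)"
  have s_pos: "s > 0" using lam_pos mu_pos unfolding s_def by (simp add: add_pos_pos)
  have s2: "s\<^sup>2 = 1 + lam * \<mu>" unfolding s_def using lam_pos mu_pos by (simp add: add_pos_pos less_imp_le)
  have eq: "lam *\<^sub>R (u + gradg y) + y - x = (lam *\<^sub>R (u + gradg z) + y - x) + lam *\<^sub>R (gradg y - gradg z)"
    by (simp add: algebra_simps)
  have "norm (lam *\<^sub>R (u + gradg y) + y - x) \<le> a + norm (lam *\<^sub>R (gradg y - gradg z))"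
    unfolding eq a_def by (rule norm_triangle_ineq)
  also have "norm (lam *\<^sub>R (gradg y - gradg z)) \<le> lam * (L * d)"
  proof -
    have "norm (gradg y - gradg z) \<le> L * norm (y - z)" using g_lip yO zO by blast
    also have "\<dots> \<le> L * d" using yz L_pos unfolding d_def by simp
    finally show ?thesis using lam_pos by (simp add: mult_left_mono)
  qed
  finally have nv: "norm (lam *\<^sub>R (u + gradg y) + y - x) \<le> a + lam * L * d" by simp
  define A where "A = a / s"
  define B where "B = lam * L * d / s"
  have A0: "A \<ge> 0" and B0: "B \<ge> 0" unfolding A_def B_def a_def d_def using s_pos lam_pos L_pos by auto
  have d0: "d \<ge> 0" unfolding d_def by simp
  have ineq2: "A\<^sup>2 + 2 * lam * \<epsilon> \<le> \<sigma>h\<^sup>2 * d\<^sup>2"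
    using ineq unfolding A_def a_def d_def s2[symmetric] by (simp add: power_divide)
  have "A\<^sup>2 \<le> (\<sigma>h * d)\<^sup>2" using ineq2 lam_pos eps
    by (smt (verit, ccfv_SIG) mult_nonneg_nonneg power_mult_distrib)
  hence Ale: "A \<le> \<sigma>h * d" using A0 sigh_nonneg d0 by (meson mult_nonneg_nonneg power2_le_imp_le)
  have "(norm (lam *\<^sub>R (u + gradg y) + y - x))\<^sup>2 / (1 + lam * \<mu>) \<le> (a + lam * L * d)\<^sup>2 / s\<^sup>2"
    unfolding s2
  proof (rule divide_right_mono)
    show "(norm (lam *\<^sub>R (u + gradg y) + y - x))\<^sup>2 \<le> (a + lam * L * d)\<^sup>2"
      using nv by (rule power_mono) simp
    show "0 \<le> 1 + lam * \<mu>" using s2 by (metis zero_le_power2)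
  qed
  also have "\<dots> = (A + B)\<^sup>2" unfolding A_def B_def using s_pos by (simp add: power_divide add_divide_distrib[symmetric])
  finally have h1: "(norm (lam *\<^sub>R (u + gradg y) + y - x))\<^sup>2 / (1 + lam * \<mu>) \<le> (A + B)\<^sup>2" .
  have "(A + B)\<^sup>2 + 2 * lam * \<epsilon> = (A\<^sup>2 + 2 * lam * \<epsilon>) + 2 * A * B + B\<^sup>2" by (simp add: power2_eq_square algebra_simps)
  also have "\<dots> \<le> \<sigma>h\<^sup>2 * d\<^sup>2 + 2 * (\<sigma>h * d) * B + B\<^sup>2"
    using ineq2 Ale B0 by (smt (verit) mult_right_mono)
  also have "\<dots> = (\<sigma>h * d + B)\<^sup>2" by (simp add: power2_eq_square algebra_simps)
  also have "\<sigma>h * d + B = (lam * L / sqrt (1 + lam * \<mu>) + \<sigma>h) * d"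
    unfolding B_def s_def by (simp add: algebra_simps)
  finally have h2: "(A + B)\<^sup>2 + 2 * lam * \<epsilon> \<le> ((lam * L / sqrt (1 + lam * \<mu>) + \<sigma>h) * d)\<^sup>2" .
  have mem: "u + gradg y \<in> (\<lambda>w. w + gradg y) ` eps_subdiff f \<epsilon> y" using usub by blast
  show ?thesis unfolding Let_def using mem h1 h2 unfolding d_def
    by (simp add: power_mult_distrib)
qed

end
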